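(* Let $\alpha\ge-1$, $n$ a positive integer, $\psi_0,\psi_n$ analytic on $\mathbb D$ and $\varphi_0,\varphi_n$ analytic self-maps of $\mathbb D$ such that $C_{\psi_0,\varphi_0}$ and $D_{\psi_n,\varphi_n,n}$ are bounded on $\mathcal H_\alpha$. Suppose $w\in\mathbb D$ satisfies $\varphi_0(w)=\varphi_n(w)=w$ and $\psi_n$ has a zero at $w$ of order at least $n$. Then the point spectrum $\sigma_{p,\alpha}(C_{\psi_0,\varphi_0}+D_{\psi_n,\varphi_n,n})$ is contained in $$\{\psi_0(w)\}\cup\{\psi_0(w)(\varphi_0'(w))^l:\ 1\le l\le n-1\}\cup\Big\{\psi_0(w)(\varphi_0'(w))^l+\binom{l}{n}\psi_n^{(n)}(w)(\varphi_n'(w))^{l-n}:\ l\ge n\Big\}.$$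
   Context: For $\alpha=-1$, $\mathcal H_\alpha$ denotes the Hardy space $H^2$ on the open unit disk $\mathbb D$; for $\alpha>-1$, $\mathcal H_\alpha$ denotes the weighted Bergman space $A^2_\alpha$ of analytic $f$ on $\mathbb D$ with $\int_{\mathbb D}|f(z)|^2(\alpha+1)(1-|z|^2)^\alpha\,dA(z)<\infty$, $dA$ normalized area measure. For $\psi$ analytic on $\mathbb D$, $\varphi$ an analytic self-map of $\mathbb D$ and $n$ a positive integer: $C_{\psi,\varphi}f=\psi\cdot(f\circ\varphi)$ and $D_{\psi,\varphi,n}f=\psi\cdot(f^{(n)}\circ\varphi)$. $\sigma_{p,\alpha}(T)$ is the point spectrum (set of eigenvalues) of $T$ on $\mathcal H_\alpha$. A function $\psi$ has a zero at $w$ of order at least $k$ if $\psi^{(j)}(w)=0$ for $0\le j\le k-1$. Convention: $0^0=1$. *)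

theory Defs
  imports "HOL-Analysis.Analysis"
begin

abbreviation udisk :: "complex set" where "udisk \<equiv> ball 0 1"

text \<open>Squared norm (as extended non-negative real) in H_alpha.
  alpha = -1: Hardy space H^2, sup over 0 <= r < 1 of the integral means
  (1/(2 pi)) \<integral>_0^{2pi} |f(r e^{it})|^2 dt.
  alpha > -1: weighted Bergman space, \<integral>_D |f|^2 (alpha+1)(1-|z|^2)^alpha dA,
  where dA = (1/pi) dx dy is normalized area measure.\<close>
definition Hnorm2 :: "real \<Rightarrow> (complex \<Rightarrow> complex) \<Rightarrow> ennreal" where
  "Hnorm2 \<alpha> f =
     (if \<alpha> = -1 then
        (SUP r\<in>{0..<1::real}.
           (\<integral>\<^sup>+ t\<in>{0..2*pi}. ennreal ((cmod (f (complex_of_real r * cis t)))\<^sup>2) \<partial>lborel)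
             / ennreal (2*pi))
      else
        (\<integral>\<^sup>+ z\<in>udisk. ennreal ((cmod (f z))\<^sup>2 * (\<alpha>+1) * (1 - (cmod z)\<^sup>2) powr \<alpha> / pi) \<partial>lborel))"

definition Hspace :: "real \<Rightarrow> (complex \<Rightarrow> complex) set" where
  "Hspace \<alpha> = {f. f holomorphic_on udisk \<and> Hnorm2 \<alpha> f < \<infinity>}"

definition Hnorm :: "real \<Rightarrow> (complex \<Rightarrow> complex) \<Rightarrow> real" where
  "Hnorm \<alpha> f = sqrt (enn2real (Hnorm2 \<alpha> f))"

definition bounded_on_H :: "real \<Rightarrow> ((complex \<Rightarrow> complex) \<Rightarrow> (complex \<Rightarrow> complex)) \<Rightarrow> bool" where
  "bounded_on_H \<alpha> T \<longleftrightarrow>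
     (\<forall>f\<in>Hspace \<alpha>. T f \<in> Hspace \<alpha>) \<and>
     (\<exists>C. \<forall>f\<in>Hspace \<alpha>. Hnorm \<alpha> (T f) \<le> C * Hnorm \<alpha> f)"

definition point_spectrum :: "real \<Rightarrow> ((complex \<Rightarrow> complex) \<Rightarrow> (complex \<Rightarrow> complex)) \<Rightarrow> complex set" where
  "point_spectrum \<alpha> T =
     {c. \<exists>f\<in>Hspace \<alpha>. (\<exists>z\<in>udisk. f z \<noteq> 0) \<and> (\<forall>z\<in>udisk. T f z = c * f z)}"

definition wcomp :: "(complex \<Rightarrow> complex) \<Rightarrow> (complex \<Rightarrow> complex) \<Rightarrow> (complex \<Rightarrow> complex) \<Rightarrow> (complex \<Rightarrow> complex)" where
  "wcomp \<psi> \<phi> f = (\<lambda>z. \<psi> z * f (\<phi> z))"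

definition wdiffcomp :: "(complex \<Rightarrow> complex) \<Rightarrow> (complex \<Rightarrow> complex) \<Rightarrow> nat \<Rightarrow> (complex \<Rightarrow> complex) \<Rightarrow> (complex \<Rightarrow> complex)" where
  "wdiffcomp \<psi> \<phi> n f = (\<lambda>z. \<psi> z * (deriv ^^ n) f (\<phi> z))"

definition self_map :: "(complex \<Rightarrow> complex) \<Rightarrow> bool" where
  "self_map \<phi> \<longleftrightarrow> \<phi> holomorphic_on udisk \<and> \<phi> ` udisk \<subseteq> udisk"

end

theory Submission
  imports Defs "HOL-Complex_Analysis.Complex_Analysis"
begin
lemma factor_zero:
  fixes f :: "complex \<Rightarrow> complex"
  assumes holfb: "f holomorphic_on ball \<xi> r" and dfz: "\<And>i. i < m \<Longrightarrow> (deriv ^^ i) f \<xi> = 0"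
  obtains g where "g holomorphic_on ball \<xi> r" "\<And>w. w \<in> ball \<xi> r \<Longrightarrow> f w = (w - \<xi>)^m * g w"
    "g \<xi> = (deriv ^^ m) f \<xi> / fact m"
proof -
  define g where "g w = suminf (\<lambda>i. (deriv ^^ (i + m)) f \<xi> / (fact(i + m)) * (w - \<xi>)^i)" for w
  have sumsg: "(\<lambda>i. (deriv ^^ (i + m)) f \<xi> / (fact(i + m)) * (w - \<xi>)^i) sums g w"
   and feq: "f w = (w - \<xi>)^m * g w"
       if w: "w \<in> ball \<xi> r" for w
  proof -
    define powf where "powf = (\<lambda>i. (deriv ^^ i) f \<xi>/(fact i) * (w - \<xi>)^i)"
    have "powf sums f w"
      unfolding powf_def by (rule holomorphic_power_series [OF holfb w])
    moreover have "(\<Sum>i<m. powf i) = 0"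
      by (simp add: powf_def dfz)
    ultimately have fsums: "(\<lambda>i. powf (i+m)) sums (f w)"
      using w sums_iff_shift' by (metis diff_zero)
    then have *: "summable (\<lambda>i. (w - \<xi>) ^ m * ((deriv ^^ (i + m)) f \<xi> * (w - \<xi>) ^ i / fact (i + m)))"
      unfolding powf_def using sums_summable
      by (auto simp: power_add mult_ac)
    have "summable (\<lambda>i. (deriv ^^ (i + m)) f \<xi> * (w - \<xi>) ^ i / fact (i + m))"
    proof (cases "w=\<xi>")
      case False then show ?thesis
        using summable_mult [OF *, of "1 / (w - \<xi>) ^ m"] by simp
    next
      case True then show ?thesis
        by (auto simp: Power.semiring_1_class.power_0_left intro!: summable_finite [of "{0}"]
                 split: if_split_asm)
    qed
    then show sumsg: "(\<lambda>i. (deriv ^^ (i + m)) f \<xi> / (fact(i + m)) * (w - \<xi>)^i) sums g w"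
      by (simp add: summable_sums_iff g_def)
    show "f w = (w - \<xi>)^m * g w"
      using sums_mult [OF sumsg, of "(w - \<xi>) ^ m"]
      by (intro sums_unique2 [OF fsums]) (auto simp: power_add mult_ac powf_def)
  qed
  then have holg: "g holomorphic_on ball \<xi> r"
    by (meson sumsg power_series_holomorphic)
  have "g \<xi> = (deriv ^^ m) f \<xi> / fact m"
    unfolding g_def
    by (subst suminf_finite [of "{0}"]) auto
  then show ?thesis using that holg feq by blast
qed

lemma isCont_hol: "f holomorphic_on S \<Longrightarrow> open S \<Longrightarrow> x \<in> S \<Longrightarrow> isCont f x"
  by (meson continuous_on_eq_continuous_at holomorphic_on_imp_continuous_on)

lemma main:
  fixes n k :: nat and P R U V f g h F :: "complex \<Rightarrow> complex" and w c :: complex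
  assumes "n \<ge> 1"
    and hP: "P holomorphic_on udisk" and hR: "R holomorphic_on udisk"
    and s0: "self_map U" and sn: "self_map V"
    and w: "w \<in> udisk" and f0: "U w = w" and fn: "V w = w"
    and dpsi: "\<forall>j<n. (deriv ^^ j) R w = 0"
    and hf: "f holomorphic_on udisk"
    and eq: "\<forall>z\<in>udisk. P z * f (U z) + R z * (deriv ^^ n) f (V z) = c * f z"
    and dk: "(deriv ^^ k) f w \<noteq> 0" and dkl: "\<And>j. j < k \<Longrightarrow> (deriv ^^ j) f w = 0"
  shows "c \<in> {P w}
           \<union> {P w * (deriv U w) ^ l | l. 1 \<le> l \<and> l \<le> n - 1}
           \<union> {P w * (deriv U w) ^ l + of_nat (l choose n) * (deriv ^^ n) R w * (deriv V w) ^ (l - n) | l. l \<ge> n}"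
proof -
  define r where "r = 1 - norm w"
  have r0: "r > 0" using w by (simp add: r_def)
  have bsub: "ball w r \<subseteq> udisk"
  proof
    fix z assume "z \<in> ball w r"
    then have "norm (z - w) < 1 - norm w" by (simp add: dist_norm norm_minus_commute r_def)
    moreover have "norm z \<le> norm w + norm (z - w)" using norm_triangle_ineq[of w "z - w"] by simp
    ultimately show "z \<in> udisk" by simp
  qed
  have hph0: "U holomorphic_on udisk" and hphn: "V holomorphic_on udisk"
    using s0 sn by (auto simp: self_map_def)
  have hfb: "f holomorphic_on ball w r" using hf bsub holomorphic_on_subset by blast
  obtain g where hg: "g holomorphic_on ball w r" and feq: "\<And>z. z \<in> ball w r \<Longrightarrow> f z = (z - w)^k * g z"
    and gw: "g w = (deriv ^^ k) f w / fact k"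
    using factor_zero[OF hfb, of k] dkl by blast
  have gw0: "g w \<noteq> 0" using gw dk by simp
  have hpb: "R holomorphic_on ball w r" using hR bsub holomorphic_on_subset by blast
  obtain h where hh: "h holomorphic_on ball w r" and peq: "\<And>z. z \<in> ball w r \<Longrightarrow> R z = (z - w)^n * h z"
    and hw: "h w = (deriv ^^ n) R w / fact n"
    using factor_zero[OF hpb, of n] dpsi by blast
  define F where "F = (deriv ^^ n) f"
  have hF: "F holomorphic_on udisk" unfolding F_def by (rule holomorphic_higher_deriv[OF hf]) simp
  have d0: "(U has_field_derivative deriv U w) (at w)"
    using holomorphic_derivI[OF hph0 _ w] by simp
  have dn: "(V has_field_derivative deriv V w) (at w)"
    using holomorphic_derivI[OF hphn _ w] by simp
  define Q0 where "Q0 z = (U z - w) / (z - w)" for z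
  define Qn where "Qn z = (V z - w) / (z - w)" for z
  have Q0l: "(Q0 \<longlongrightarrow> deriv U w) (at w)"
    using d0 unfolding has_field_derivative_iff Q0_def f0 by simp
  have Qnl: "(Qn \<longlongrightarrow> deriv V w) (at w)"
    using dn unfolding has_field_derivative_iff Qn_def fn by simp
  have wb: "w \<in> ball w r" using r0 by simp
  have c0: "isCont U w" using isCont_hol[OF hph0 _ w] by simp
  have cn: "isCont V w" using isCont_hol[OF hphn _ w] by simp
  have cg: "isCont g w" using isCont_hol[OF hg _ wb] by simp
  have ch: "isCont h w" using isCont_hol[OF hh _ wb] by simp
  have cpsi0: "isCont P w" using isCont_hol[OF hP _ w] by simp
  have cF: "isCont F w" using isCont_hol[OF hF _ w] by simp
  have cg0: "isCont (\<lambda>z. g (U z)) w" using isCont_o2[OF c0] cg f0 by simp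
  have ev1: "eventually (\<lambda>z. z \<in> ball w r) (at w)"
    using eventually_at_topological wb by (metis open_ball)
  have ev2: "eventually (\<lambda>z. U z \<in> ball w r) (at w)"
    using c0 f0 wb unfolding isCont_def by (metis open_ball topological_tendstoD)
  have ev3: "eventually (\<lambda>z. V z \<in> ball w r) (at w)"
    using cn fn wb unfolding isCont_def by (metis open_ball topological_tendstoD)
  have ev4: "eventually (\<lambda>z. z \<noteq> w) (at w)"
    by (simp add: eventually_at_filter)
  define A where "A z = P z * Q0 z ^ k * g (U z)" for z
  have Al: "(A \<longlongrightarrow> P w * deriv U w ^ k * g w) (at w)"
    unfolding A_def
    by (intro tendsto_intros Q0l) (use cpsi0 cg0 f0 in \<open>auto simp: isCont_def\<close>)
  have gl: "((\<lambda>z. c * g z) \<longlongrightarrow> c * g w) (at w)"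
    using cg by (intro tendsto_intros) (simp add: isCont_def)
  have Aeq: "P z * f (U z) = (z - w)^k * A z" if "z \<noteq> w" "U z \<in> ball w r" for z
  proof -
    have "U z - w = (z - w) * Q0 z" using that by (simp add: Q0_def)
    then show ?thesis using feq[OF that(2)] by (simp add: A_def power_mult_distrib)
  qed
  show ?thesis
  proof (cases "k < n")
    case True
    define T where "T z = (z - w)^(n-k) * h z * F (V z)" for z
    have cFn: "isCont (\<lambda>z. F (V z)) w" using isCont_o2[OF cn] cF fn by simp
    have Tl: "(T \<longlongrightarrow> 0) (at w)"
    proof -
      have "(T \<longlongrightarrow> (w - w)^(n-k) * h w * F (V w)) (at w)"
        unfolding T_def
        by (intro tendsto_intros) (use ch cFn in \<open>auto simp: isCont_def\<close>)
      moreover have "(0::complex)^(n-k) = 0" using True by (simp add: power_0_left)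
      ultimately show ?thesis by simp
    qed
    have ev: "eventually (\<lambda>z. A z + T z = c * g z) (at w)"
      using ev1 ev2 ev3 ev4
    proof eventually_elim
      case (elim z)
      have RT: "R z * F (V z) = (z - w)^k * T z"
        using peq[OF elim(1)] True by (simp add: T_def power_add[symmetric] mult_ac)
      have zD: "z \<in> udisk" using bsub elim(1) by blast
      have e: "P z * f (U z) + R z * F (V z) = c * f z" using eq zD unfolding F_def by blast
      have "(z - w)^k * (A z + T z) = P z * f (U z) + R z * F (V z)"
        using Aeq[OF elim(4) elim(2)] RT by (simp add: algebra_simps)
      also have "\<dots> = c * f z" by (rule e)
      also have "\<dots> = (z - w)^k * (c * g z)" using feq[OF elim(1)] by simp
      finally show ?case using elim(4) by simp
    qed
    have "((\<lambda>z. A z + T z) \<longlongrightarrow> P w * deriv U w ^ k * g w + 0) (at w)"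
      by (intro tendsto_intros Al Tl)
    then have "((\<lambda>z. c * g z) \<longlongrightarrow> P w * deriv U w ^ k * g w) (at w)"
      using ev by (simp add: tendsto_cong)
    then have "c * g w = P w * deriv U w ^ k * g w"
      using gl tendsto_unique by (metis trivial_limit_at)
    then have cv: "c = P w * deriv U w ^ k" using gw0 by simp
    show ?thesis
    proof (cases "k = 0")
      case True then show ?thesis using cv by simp
    next
      case False then show ?thesis using cv \<open>k < n\<close> by auto
    qed
  next
    case False
    have hFb: "F holomorphic_on ball w r" using hF bsub holomorphic_on_subset by blast
    have "(deriv ^^ j) F w = 0" if "j < k - n" for j
      using dkl[of "j + n"] that False by (simp add: F_def funpow_add)
    then obtain G where hG: "G holomorphic_on ball w r"
      and Feq: "\<And>z. z \<in> ball w r \<Longrightarrow> F z = (z - w)^(k-n) * G z"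
      and Gw: "G w = (deriv ^^ (k-n)) F w / fact (k-n)"
      using factor_zero[OF hFb, of "k-n"] by blast
    have Gw': "G w = (deriv ^^ k) f w / fact (k-n)"
    proof -
      have kk: "k = (k-n)+n" using False by simp
      have "(deriv ^^ (k-n)) ((deriv ^^ n) f) = (deriv ^^ k) f"
        by (subst kk) (simp add: funpow_add)
      then show ?thesis using Gw by (simp add: F_def)
    qed
    have cG: "isCont G w" using isCont_hol[OF hG _ wb] by simp
    have cGn: "isCont (\<lambda>z. G (V z)) w" using isCont_o2[OF cn] cG fn by simp
    define T where "T z = h z * Qn z ^ (k-n) * G (V z)" for z
    have Tl: "(T \<longlongrightarrow> h w * deriv V w ^ (k-n) * G w) (at w)"
      unfolding T_def
      by (intro tendsto_intros Qnl) (use ch cGn fn in \<open>auto simp: isCont_def\<close>)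
    have ev: "eventually (\<lambda>z. A z + T z = c * g z) (at w)"
      using ev1 ev2 ev3 ev4
    proof eventually_elim
      case (elim z)
      have "V z - w = (z - w) * Qn z" using elim by (simp add: Qn_def)
      then have "F (V z) = (z - w)^(k-n) * (Qn z ^ (k-n) * G (V z))"
        using Feq[OF elim(3)] by (simp add: power_mult_distrib)
      then have RT: "R z * F (V z) = (z - w)^k * T z"
        using peq[OF elim(1)] False
        by (simp add: T_def mult_ac power_add[symmetric])
      have zD: "z \<in> udisk" using bsub elim(1) by blast
      have e: "P z * f (U z) + R z * F (V z) = c * f z" using eq zD unfolding F_def by blast
      have "(z - w)^k * (A z + T z) = P z * f (U z) + R z * F (V z)"
        using Aeq[OF elim(4) elim(2)] RT by (simp add: algebra_simps)
      also have "\<dots> = c * f z" by (rule e)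
      also have "\<dots> = (z - w)^k * (c * g z)" using feq[OF elim(1)] by simp
      finally show ?case using elim(4) by simp
    qed
    have "((\<lambda>z. A z + T z) \<longlongrightarrow> P w * deriv U w ^ k * g w + h w * deriv V w ^ (k-n) * G w) (at w)"
      by (intro tendsto_intros Al Tl)
    then have "((\<lambda>z. c * g z) \<longlongrightarrow> P w * deriv U w ^ k * g w + h w * deriv V w ^ (k-n) * G w) (at w)"
      using ev by (simp add: tendsto_cong)
    then have ce: "c * g w = P w * deriv U w ^ k * g w + h w * deriv V w ^ (k-n) * G w"
      using gl tendsto_unique by (metis trivial_limit_at)
    have "h w * deriv V w ^ (k-n) * G w = of_nat (k choose n) * (deriv ^^ n) R w * deriv V w ^ (k - n) * g w"
      using False by (simp add: hw Gw' gw binomial_fact field_simps)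
    then have "c * g w = (P w * deriv U w ^ k + of_nat (k choose n) * (deriv ^^ n) R w * deriv V w ^ (k - n)) * g w"
      using ce by (simp add: algebra_simps)
    then have "c = P w * deriv U w ^ k + of_nat (k choose n) * (deriv ^^ n) R w * deriv V w ^ (k - n)"
      using gw0 by simp
    then show ?thesis using False by auto
  qed
qed

theorem proposition2p2:
  fixes \<alpha> :: real and n :: nat and \<psi>0 \<psi>n \<phi>0 \<phi>n :: "complex \<Rightarrow> complex" and w :: complex
  assumes "\<alpha> \<ge> -1" and "n \<ge> 1"
    and "\<psi>0 holomorphic_on udisk" and "\<psi>n holomorphic_on udisk"
    and "self_map \<phi>0" and "self_map \<phi>n"
    and "bounded_on_H \<alpha> (wcomp \<psi>0 \<phi>0)"
    and "bounded_on_H \<alpha> (wdiffcomp \<psi>n \<phi>n n)"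
    and "w \<in> udisk" and "\<phi>0 w = w" and "\<phi>n w = w"
    and "\<forall>j<n. (deriv ^^ j) \<psi>n w = 0"
  shows "point_spectrum \<alpha> (\<lambda>f z. wcomp \<psi>0 \<phi>0 f z + wdiffcomp \<psi>n \<phi>n n f z) \<subseteq>
           {\<psi>0 w}
           \<union> {\<psi>0 w * (deriv \<phi>0 w) ^ l | l. 1 \<le> l \<and> l \<le> n - 1}
           \<union> {\<psi>0 w * (deriv \<phi>0 w) ^ l + of_nat (l choose n) * (deriv ^^ n) \<psi>n w * (deriv \<phi>n w) ^ (l - n) | l. l \<ge> n}"
proof
  fix c assume "c \<in> point_spectrum \<alpha> (\<lambda>f z. wcomp \<psi>0 \<phi>0 f z + wdiffcomp \<psi>n \<phi>n n f z)"
  then obtain f where fH: "f \<in> Hspace \<alpha>" and nz: "\<exists>z\<in>udisk. f z \<noteq> 0"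
    and eq: "\<forall>z\<in>udisk. \<psi>0 z * f (\<phi>0 z) + \<psi>n z * (deriv ^^ n) f (\<phi>n z) = c * f z"
    by (auto simp: point_spectrum_def wcomp_def wdiffcomp_def)
  have hf: "f holomorphic_on udisk" using fH by (simp add: Hspace_def)
  have ex: "\<exists>k. (deriv ^^ k) f w \<noteq> 0"
  proof (rule ccontr)
    assume "\<not> ?thesis"
    then have dz: "\<And>k. (deriv ^^ k) f w = 0" by blast
    have "f z = 0" if "z \<in> udisk" for z
      by (rule holomorphic_fun_eq_0_on_connected[OF hf open_ball connected_ball dz assms(9) that])
    then have "\<forall>z\<in>udisk. f z = 0" by blast
    then show False using nz by auto
  qed
  define k where "k = (LEAST k. (deriv ^^ k) f w \<noteq> 0)"
  have dk: "(deriv ^^ k) f w \<noteq> 0" unfolding k_def using ex by (rule LeastI_ex)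
  have dkl: "\<And>j. j < k \<Longrightarrow> (deriv ^^ j) f w = 0" unfolding k_def using not_less_Least by blast
  show "c \<in> {\<psi>0 w}
           \<union> {\<psi>0 w * (deriv \<phi>0 w) ^ l | l. 1 \<le> l \<and> l \<le> n - 1}
           \<union> {\<psi>0 w * (deriv \<phi>0 w) ^ l + of_nat (l choose n) * (deriv ^^ n) \<psi>n w * (deriv \<phi>n w) ^ (l - n) | l. l \<ge> n}"
    using main[where P=\<psi>0 and R=\<psi>n and U=\<phi>0 and V=\<phi>n and f=f and c=c and k=k and w=w and n=n] assms(2-6) assms(9-12) hf eq dk dkl by blast
qed

end
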